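(* For any integers $k_1<k_2$, the function $\sin:(k_1\pi,k_2\pi)\to\mathbb{R}$ is amenable.
   Context: Relative distance on $\mathbb{R}$: $\mathrm{dist}(x,y)=0$ if $x=y=0$, $\mathrm{dist}(x,y)=|\log(y/x)|$ if $xy>0$, and $\mathrm{dist}(x,y)=\infty$ otherwise. For a real analytic function $f$ on an open set $\Omega\subseteq\mathbb{R}$, not identically zero, the condition number is $\kappa(f,x)=0$ if $x=0$, $\kappa(f,x)=\infty$ if $x\neq0$ and $f(x)=0$, and $\kappa(f,x)=|x|\,|f'(x)|/|f(x)|$ otherwise; $\mu(f,x)=1+\kappa(f,x)$. $f:\Omega\to\mathbb{R}$ is amenable if there is $C>0$ such that for every $x\in\Omega$ with $\kappa(f,x)<\infty$, the set $B_x=\{y\in\mathbb{R}:\mathrm{dist}(y,x)<1/(C\mu(f,x))\}$ is contained in $\Omega$ and $\mu(f,y)\leq C\mu(f,x)$ for all $y\in B_x$. *)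

theory Defs
  imports "HOL-Analysis.Analysis"
begin

definition rel_dist :: "real \<Rightarrow> real \<Rightarrow> ereal" where
  "rel_dist x y =
     (if x = 0 \<and> y = 0 then 0
      else if x * y > 0 then ereal \<bar>ln (y / x)\<bar>
      else \<infinity>)"

definition cond_num :: "(real \<Rightarrow> real) \<Rightarrow> real \<Rightarrow> ereal" where
  "cond_num f x =
     (if x = 0 then 0
      else if f x = 0 then \<infinity>
      else ereal (\<bar>x\<bar> * \<bar>deriv f x\<bar> / \<bar>f x\<bar>))"

definition mu_cond :: "(real \<Rightarrow> real) \<Rightarrow> real \<Rightarrow> ereal" where
  "mu_cond f x = 1 + cond_num f x"

definition amenable :: "(real \<Rightarrow> real) \<Rightarrow> real set \<Rightarrow> bool" where
  "amenable f \<Omega> \<longleftrightarrow>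
     (\<exists>C::real. C > 0 \<and>
        (\<forall>x\<in>\<Omega>. cond_num f x < \<infinity> \<longrightarrow>
           (let B = {y. rel_dist y x < 1 / (ereal C * mu_cond f x)} in
              B \<subseteq> \<Omega> \<and> (\<forall>y\<in>B. mu_cond f y \<le> ereal C * mu_cond f x))))"

end

theory Submission
  imports Defs
begin

lemma sin_lip: fixes a b :: real shows "\<bar>sin a - sin b\<bar> \<le> \<bar>a - b\<bar>"
proof -
  have "\<bar>sin a - sin b\<bar> = 2 * \<bar>sin ((a - b) / 2)\<bar> * \<bar>cos ((a + b) / 2)\<bar>"
    by (simp add: sin_diff_sin abs_mult)
  also have "\<dots> \<le> 2 * \<bar>(a - b) / 2\<bar> * 1"
    using abs_sin_x_le_abs_x[of "(a - b) / 2"]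
    by (intro mult_mono) auto
  finally show ?thesis by simp
qed

lemma key_x:
  fixes x M :: real
  assumes "\<bar>x\<bar> \<le> M" "M \<ge> 1"
  shows "\<bar>x\<bar> \<le> 2 * M * (\<bar>sin x\<bar> + \<bar>x\<bar> * \<bar>cos x\<bar>)"
proof -
  have M0: "M \<ge> 0" using assms by linarith
  show ?thesis
  proof (cases "\<bar>cos x\<bar> \<ge> 1/2")
    case True
    have "\<bar>x\<bar> * 1 \<le> \<bar>x\<bar> * (2 * \<bar>cos x\<bar>)" using True
      by (intro mult_left_mono) auto
    also have "\<dots> = (2 * (\<bar>x\<bar> * \<bar>cos x\<bar>)) * 1" by simp
    also have "\<dots> \<le> (2 * (\<bar>x\<bar> * \<bar>cos x\<bar>)) * M"
      using \<open>M \<ge> 1\<close> by (intro mult_left_mono) auto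
    also have "\<dots> = 2 * M * (\<bar>x\<bar> * \<bar>cos x\<bar>)" by simp
    also have "\<dots> \<le> 2 * M * (\<bar>sin x\<bar> + \<bar>x\<bar> * \<bar>cos x\<bar>)"
      using M0 by (intro mult_left_mono) auto
    finally show ?thesis by simp
  next
    case False
    have "(sin x)^2 + (cos x)^2 = 1" by simp
    moreover have "(cos x)^2 \<le> (1/2)^2"
    proof -
      have "\<bar>cos x\<bar>^2 \<le> (1/2)^2" using False by (intro power_mono) auto
      thus ?thesis by simp
    qed
    ultimately have "(1/2)^2 \<le> (sin x)^2" by (simp add: power2_eq_square)
    hence "1/2 \<le> \<bar>sin x\<bar>"
      using abs_le_square_iff[of "1/2" "sin x"] by simp
    have "2 * M * (1/2) \<le> 2 * M * \<bar>sin x\<bar>" using M0 \<open>1/2 \<le> \<bar>sin x\<bar>\<close>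
      by (intro mult_left_mono) auto
    hence "M \<le> 2 * M * \<bar>sin x\<bar>" by simp
    moreover have "2 * M * \<bar>sin x\<bar> \<le> 2 * M * (\<bar>sin x\<bar> + \<bar>x\<bar> * \<bar>cos x\<bar>)"
      using M0 by (intro mult_left_mono) auto
    ultimately show ?thesis using assms by linarith
  qed
qed
lemma core:
  fixes x y M :: real
  assumes M1: "M \<ge> 1" and xM: "\<bar>x\<bar> \<le> M" and sx: "sin x \<noteq> 0" and xy: "x * y > 0"
    and ld: "\<bar>ln (x / y)\<bar> < 1 / ((1 + 12 * M) * (1 + \<bar>x\<bar> * \<bar>cos x\<bar> / \<bar>sin x\<bar>))"
  shows "\<bar>y - x\<bar> \<le> \<bar>sin x\<bar> / 2 \<and> sin y \<noteq> 0 \<and>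
    1 + \<bar>y\<bar> * \<bar>cos y\<bar> / \<bar>sin y\<bar> \<le> (1 + 12 * M) * (1 + \<bar>x\<bar> * \<bar>cos x\<bar> / \<bar>sin x\<bar>)"
proof -
  define s where "s = \<bar>sin x\<bar>"
  define m where "m = 1 + \<bar>x\<bar> * \<bar>cos x\<bar> / s"
  define C where "C = 1 + 12 * M"
  define d where "d = 1 / (C * m)"
  have s0: "s > 0" using sx s_def by auto
  have m1: "m \<ge> 1" unfolding m_def using s0 by auto
  have C13: "C \<ge> 13" using M1 C_def by auto
  have d0: "d > 0" using m1 C13 d_def by auto
  have dh: "d \<le> 1/2"
  proof -
    have "C * m \<ge> 2" using m1 C13 mult_left_mono[of 1 m C] by linarith
    thus ?thesis unfolding d_def by (simp add: field_simps)
  qed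
  have sm: "s * m = s + \<bar>x\<bar> * \<bar>cos x\<bar>" unfolding m_def using s0 by (simp add: field_simps)
  have kx: "\<bar>x\<bar> \<le> 2 * M * (s * m)" using key_x[OF xM M1] sm s_def by simp
  define r where "r = y / x"
  have x0: "x \<noteq> 0" using xy by auto
  have r0: "r > 0" unfolding r_def using xy
    by (auto simp add: zero_less_divide_iff zero_less_mult_iff)
  have "ln r = - ln (x / y)" unfolding r_def using xy
    by (metis ln_inverse inverse_divide zero_less_divide_iff zero_less_mult_iff)
  hence lr: "\<bar>ln r\<bar> < d" using ld unfolding d_def C_def m_def s_def by simp
  have "r = exp (ln r)" using r0 by simp
  have up: "r \<le> exp d" using lr r0 by (metis abs_less_iff exp_ln exp_le_cancel_iff less_imp_le)
  have lo: "exp (-d) \<le> r" using lr r0 by (metis abs_less_iff exp_ln exp_le_cancel_iff less_imp_le minus_less_iff)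
  have e1: "1 - d \<le> exp (-d)" using exp_ge_add_one_self[of "-d"] by simp
  have "exp d * exp (-d) = 1" by (simp add: exp_minus)
  moreover have "exp d * (1 - d) \<le> exp d * exp (-d)"
    using mult_left_mono[OF e1, of "exp d"] by simp
  ultimately have ed: "exp d * (1 - d) \<le> 1" by simp
  have d1: "1 - d > 0" using dh by simp
  have "exp d \<le> 1 / (1 - d)" using ed d1 by (simp add: le_divide_eq)
  moreover have "1 / (1 - d) \<le> 1 + 2 * d"
  proof -
    have "d * (1 - 2 * d) \<ge> 0" using d0 dh by simp
    hence "(1 + 2 * d) * (1 - d) \<ge> 1" by (simp add: algebra_simps)
    thus ?thesis using d1 by (simp add: divide_le_eq)
  qed
  ultimately have "exp d \<le> 1 + 2 * d" by linarith
  hence rr: "\<bar>r - 1\<bar> \<le> 2 * d" using up lo e1 d0 by linarith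
  have yx: "y - x = x * (r - 1)" unfolding r_def using x0 by (simp add: field_simps)
  have D1: "\<bar>y - x\<bar> \<le> 2 * d * \<bar>x\<bar>" unfolding yx abs_mult using rr
    by (simp add: mult_left_mono mult.commute)
  have "2 * d * \<bar>x\<bar> \<le> 2 * d * (2 * M * (s * m))" using kx d0 by (intro mult_left_mono) auto
  also have "\<dots> = 4 * M * s / C" unfolding d_def using m1 C13 by (simp add: field_simps)
  also have "\<dots> \<le> s / 2" using C13 s0 M1 unfolding C_def by (simp add: field_simps)
  finally have D2: "\<bar>y - x\<bar> \<le> s / 2" using D1 by linarith
  have sy: "\<bar>sin y\<bar> \<ge> s / 2" using sin_lip[of y x] D2 s_def by linarith
  have "2 * d * \<bar>x\<bar> \<le> 1 * \<bar>x\<bar>" using dh by (intro mult_right_mono) auto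
  hence yb: "\<bar>y\<bar> \<le> 2 * \<bar>x\<bar>" using D1 by linarith
  have "\<bar>y\<bar> * \<bar>cos y\<bar> / \<bar>sin y\<bar> \<le> \<bar>y\<bar> / (s / 2)"
  proof -
    have "\<bar>y\<bar> * \<bar>cos y\<bar> \<le> \<bar>y\<bar>" by (simp add: mult_left_le)
    hence "\<bar>y\<bar> * \<bar>cos y\<bar> / \<bar>sin y\<bar> \<le> \<bar>y\<bar> / \<bar>sin y\<bar>"
      using sy s0 by (simp add: divide_right_mono)
    also have "\<dots> \<le> \<bar>y\<bar> / (s / 2)" using sy s0 by (intro divide_left_mono) auto
    finally show ?thesis .
  qed
  also have "\<dots> \<le> 4 * \<bar>x\<bar> / s" using yb s0 by (simp add: field_simps)
  also have "\<dots> \<le> 8 * M * m" using kx s0 by (simp add: field_simps)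
  finally have ineq: "\<bar>y\<bar> * \<bar>cos y\<bar> / \<bar>sin y\<bar> \<le> 8 * M * m" .
  have "1 + \<bar>y\<bar> * \<bar>cos y\<bar> / \<bar>sin y\<bar> \<le> C * m"
  proof -
    have "C * m = m + 12 * (M * m)" unfolding C_def by (simp add: algebra_simps)
    moreover have "M * m \<ge> 0" using m1 M1 by simp
    moreover have "8 * M * m = 8 * (M * m)" by simp
    ultimately show ?thesis using ineq m1 by linarith
  qed
  moreover have "sin y \<noteq> 0" using sy s0 by auto
  ultimately show ?thesis using D2 unfolding C_def m_def s_def by simp
qed
lemma sin_int_pi: "sin (real_of_int k * pi) = 0"
  using sin_times_pi_eq_0 by auto

lemma in_interval:
  fixes x y :: real and k1 k2 :: int
  assumes "x \<in> {real_of_int k1 * pi <..< real_of_int k2 * pi}" "sin x \<noteq> 0"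
    "\<bar>y - x\<bar> \<le> \<bar>sin x\<bar> / 2"
  shows "y \<in> {real_of_int k1 * pi <..< real_of_int k2 * pi}"
proof (rule ccontr)
  assume "y \<notin> {real_of_int k1 * pi <..< real_of_int k2 * pi}"
  hence "y \<le> real_of_int k1 * pi \<or> y \<ge> real_of_int k2 * pi" by auto
  then obtain k where "\<bar>real_of_int k * pi - x\<bar> \<le> \<bar>y - x\<bar>"
  proof
    assume "y \<le> real_of_int k1 * pi"
    hence "\<bar>real_of_int k1 * pi - x\<bar> \<le> \<bar>y - x\<bar>" using assms(1) by auto
    thus ?thesis by (rule that)
  next
    assume "y \<ge> real_of_int k2 * pi"
    hence "\<bar>real_of_int k2 * pi - x\<bar> \<le> \<bar>y - x\<bar>" using assms(1) by auto
    thus ?thesis by (rule that)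
  qed
  hence "\<bar>sin (real_of_int k * pi) - sin x\<bar> \<le> \<bar>sin x\<bar> / 2"
    using sin_lip[of "real_of_int k * pi" x] assms(3) by linarith
  thus False using sin_int_pi[of k] assms(2) by simp
qed

lemma deriv_sin_eq: "deriv sin x = cos x"
  by (rule DERIV_imp_deriv) (rule DERIV_sin)

theorem mainTheorem9:
  fixes k1 k2 :: int
  assumes "k1 < k2"
  shows "amenable sin {real_of_int k1 * pi <..< real_of_int k2 * pi}"
proof -
  define \<Omega> where "\<Omega> = {real_of_int k1 * pi <..< real_of_int k2 * pi}"
  define M where "M = max 1 (max \<bar>real_of_int k1 * pi\<bar> \<bar>real_of_int k2 * pi\<bar>)"
  define C where "C = 1 + 12 * M"
  have M1: "M \<ge> 1" unfolding M_def by simp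
  have C0: "C > 0" unfolding C_def using M1 by simp
  have xM: "\<bar>x\<bar> \<le> M" if "x \<in> \<Omega>" for x
    using that unfolding \<Omega>_def M_def by auto
  have main: "let B = {y. rel_dist y x < 1 / (ereal C * mu_cond sin x)} in
      B \<subseteq> \<Omega> \<and> (\<forall>y\<in>B. mu_cond sin y \<le> ereal C * mu_cond sin x)"
    if xO: "x \<in> \<Omega>" and cf: "cond_num sin x < \<infinity>" for x
  proof (cases "x = 0")
    case True
    have mu0: "mu_cond sin x = 1" using True by (simp add: mu_cond_def cond_num_def)
    have "{y. rel_dist y x < 1 / (ereal C * mu_cond sin x)} \<subseteq> {0}"
      using True mu0 by (auto simp: rel_dist_def)
    moreover have "mu_cond sin 0 = 1" by (simp add: mu_cond_def cond_num_def)
    ultimately show ?thesis using True xO mu0 C0 M1 unfolding Let_def C_def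
      by (auto simp: one_ereal_def)
  next
    case False
    have sx: "sin x \<noteq> 0" using cf False by (auto simp: cond_num_def)
    define m where "m = 1 + \<bar>x\<bar> * \<bar>cos x\<bar> / \<bar>sin x\<bar>"
    have m1: "m \<ge> 1" unfolding m_def by simp
    have mux: "mu_cond sin x = ereal m"
      using False sx by (simp add: mu_cond_def cond_num_def deriv_sin_eq m_def one_ereal_def)
    have Cm: "ereal C * mu_cond sin x = ereal (C * m)" using mux by simp
    have dd: "1 / (ereal C * mu_cond sin x) = ereal (1 / (C * m))"
      using Cm C0 m1 by (simp add: one_ereal_def)
    have Y: "y \<in> \<Omega> \<and> mu_cond sin y \<le> ereal C * mu_cond sin x"
      if yB: "rel_dist y x < 1 / (ereal C * mu_cond sin x)" for y
    proof -
      have xy: "x * y > 0" and ld: "\<bar>ln (x / y)\<bar> < 1 / (C * m)"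
        using yB False unfolding dd by (auto simp: rel_dist_def mult.commute split: if_splits)
      have c: "\<bar>y - x\<bar> \<le> \<bar>sin x\<bar> / 2 \<and> sin y \<noteq> 0 \<and>
        1 + \<bar>y\<bar> * \<bar>cos y\<bar> / \<bar>sin y\<bar> \<le> C * m"
        using core[OF M1 xM[OF xO] sx xy] ld unfolding C_def m_def by simp
      have y0: "y \<noteq> 0" using xy by auto
      have "mu_cond sin y = ereal (1 + \<bar>y\<bar> * \<bar>cos y\<bar> / \<bar>sin y\<bar>)"
        using y0 c by (simp add: mu_cond_def cond_num_def deriv_sin_eq one_ereal_def)
      hence "mu_cond sin y \<le> ereal C * mu_cond sin x" using c Cm by simp
      moreover have "y \<in> \<Omega>" using in_interval[of x k1 k2 y] xO sx c unfolding \<Omega>_def by blast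
      ultimately show ?thesis by blast
    qed
    show ?thesis unfolding Let_def using Y by blast
  qed
  show ?thesis unfolding amenable_def \<Omega>_def[symmetric]
    using C0 main by blast
qed
end
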